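(* Assume the setting in the context (deterministic $\Phi$ with $\operatorname{rank}(\widehat\Phi_1)=k$). Let $\theta_1\le\dots\le\theta_k$ be the principal angles between $\mathcal R(Q)$ and $\mathcal R(U_k)$, and $\varphi_1\le\dots\le\varphi_k$ the principal angles between $\mathcal R(P)$ and $\mathcal R(V_k)$. Then for $i=1,\dots,k$, $$\sin\theta_i\le\frac{\delta_i^{2q+2}\|\widehat\Phi_2\widehat\Phi_1^\dagger\|_2}{\sqrt{1+\delta_i^{4q+4}\|\widehat\Phi_2\widehat\Phi_1^\dagger\|_2^2}},\qquad \sin\varphi_i\le\frac{\delta_i^{2q+1}\|\widehat\Phi_2\widehat\Phi_1^\dagger\|_2}{\sqrt{1+\delta_i^{4q+2}\|\widehat\Phi_2\widehat\Phi_1^\dagger\|_2^2}}.$$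
   Context: Let $A\in\mathbb R^{m\times n}$ with $m\ge n$ have full SVD $A=U\Sigma V^T$, with singular values $\sigma_1\ge\sigma_2\ge\dots\ge\sigma_n\ge 0$. Fix an integer $k\ge1$ with $\sigma_k>0$ (the paper regards $A$ as having numerical rank $k$, i.e. $\sigma_k$ well separated from $\sigma_{k+1}$). Write $U=[U_k\ U_\perp]$ with $U_k\in\mathbb R^{m\times k}$ the first $k$ left singular vectors $u_1,\dots,u_k$, $U_\perp\in\mathbb R^{m\times(m-k)}$ the rest; $V=[V_k\ V_\perp]$ with $V_k\in\mathbb R^{n\times k}$ the first $k$ right singular vectors $v_1,\dots,v_k$; $\Sigma_k=\mathrm{diag}(\sigma_1,\dots,\sigma_k)$ and $\Sigma_\perp$ the remaining diagonal block of $\Sigma$ containing $\sigma_{k+1},\dots,\sigma_n$ (so $\|\Sigma_\perp\|_2=\sigma_{k+1}$, $\|\Sigma_\perp\|_F=(\sum_{i>k}\sigma_i^2)^{1/2}$). The notation $\|\cdot\|_{2,F}$ means the statement holds for both the spectral and Frobenius norm. Let $p\ge1$ be an oversampling integer, $d=k+p<n$, and $q\ge0$ an integer (power-iteration parameter). RU-QLP (Randomized Unpivoted QLP): given $\Phi\in\mathbb R^{m\times d}$, let $\bar P\in\mathbb R^{n\times d}$ have orthonormal columns spanning the range of $(A^TA)^qA^T\Phi$ (assumed of rank $d$); compute the thin unpivoted QR factorization $A\bar P=QR$ with $Q\in\mathbb R^{m\times d}$ having orthonormal columns and $R\in\mathbb R^{d\times d}$ upper triangular; compute the thin unpivoted QR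 factorization $R^T=\widetilde P\widetilde R$; set $P=\bar P\widetilde P\in\mathbb R^{n\times d}$ and $L=\widetilde R^T$ (lower triangular), giving $\hat A=QLP^T$. Partition $R=\begin{bmatrix}R_{11}&R_{12}\\0&R_{22}\end{bmatrix}$ and $L=\begin{bmatrix}L_{11}&0\\L_{21}&L_{22}\end{bmatrix}$ with $R_{11},L_{11}\in\mathbb R^{k\times k}$. Define $\widehat\Phi_1=U_k^T\Phi\in\mathbb R^{k\times d}$ and $\widehat\Phi_2=U_\perp^T\Phi\in\mathbb R^{(m-k)\times d}$, assume $\widehat\Phi_1$ has rank $k$, and let $\dagger$ denote the Moore–Penrose inverse. Set $\delta_i=\sigma_{k+1}/\sigma_i$ for $i=1,\dots,k$ and $\gamma=\sigma_n/\sigma_1$. Principal angles between a subspace $\mathcal X$ and a $k$-dimensional subspace $\mathcal Y$ (with $\dim\mathcal X\ge k$) are the $k$ canonical angles $0\le\alpha_1\le\dots\le\alpha_k\le\pi/2$; for orthonormal bases $X$, $Y$, the values $\sin\alpha_i$ are the singular values of $(I-XX^T)Y$. *)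

theory Defs
  imports "HOL-Analysis.Analysis" "Jordan_Normal_Form.DL_Rank"
begin

definition vnorm :: "real vec \<Rightarrow> real" where
  "vnorm x = sqrt (x \<bullet> x)"

definition norm2 :: "real mat \<Rightarrow> real" where
  "norm2 M = Sup {vnorm (M *\<^sub>v x) | x. x \<in> carrier_vec (dim_col M) \<and> vnorm x \<le> 1}"

definition range_mat :: "real mat \<Rightarrow> real vec set" where
  "range_mat M = {M *\<^sub>v x | x. x \<in> carrier_vec (dim_col M)}"

definition orth_cols :: "real mat \<Rightarrow> bool" where
  "orth_cols M \<longleftrightarrow> transpose_mat M * M = 1\<^sub>m (dim_col M)"

definition orthogonal_mat :: "real mat \<Rightarrow> bool" where
  "orthogonal_mat M \<longleftrightarrow> dim_row M = dim_col M \<and> orth_cols M"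

definition is_pinv :: "real mat \<Rightarrow> real mat \<Rightarrow> bool" where
  "is_pinv M X \<longleftrightarrow> X \<in> carrier_mat (dim_col M) (dim_row M) \<and>
     M * X * M = M \<and> X * M * X = X \<and>
     transpose_mat (M * X) = M * X \<and> transpose_mat (X * M) = X * M"

definition pinv :: "real mat \<Rightarrow> real mat" where
  "pinv M = (THE X. is_pinv M X)"

definition is_svd :: "real mat \<Rightarrow> real mat \<Rightarrow> real mat \<Rightarrow> real mat \<Rightarrow> bool" where
  "is_svd M U S V \<longleftrightarrow>
     U \<in> carrier_mat (dim_row M) (dim_row M) \<and> orthogonal_mat U \<and>
     V \<in> carrier_mat (dim_col M) (dim_col M) \<and> orthogonal_mat V \<and>
     S \<in> carrier_mat (dim_row M) (dim_col M) \<and>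
     (\<forall>i<dim_row M. \<forall>j<dim_col M. i \<noteq> j \<longrightarrow> S $$ (i,j) = 0) \<and>
     (\<forall>i<min (dim_row M) (dim_col M). S $$ (i,i) \<ge> 0) \<and>
     (\<forall>i j. i \<le> j \<longrightarrow> j < min (dim_row M) (dim_col M) \<longrightarrow> S $$ (j,j) \<le> S $$ (i,i)) \<and>
     M = U * S * transpose_mat V"

definition singular_values_desc :: "real mat \<Rightarrow> (nat \<Rightarrow> real) \<Rightarrow> bool" where
  "singular_values_desc M s \<longleftrightarrow>
     (\<exists>U S V. is_svd M U S V \<and> (\<forall>i<min (dim_row M) (dim_col M). s i = S $$ (i,i)))"

(* Principal angles between range(X) (X orthonormal columns) and the k-dim range(Y)
   (Y orthonormal columns, k = dim_col Y): t i = sin(alpha_(i+1)), with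
   alpha_1 \<le> ... \<le> alpha_k, i.e. the singular values of (I - X X^T) Y in
   nondecreasing order. *)
definition principal_angle_sines :: "real mat \<Rightarrow> real mat \<Rightarrow> (nat \<Rightarrow> real) \<Rightarrow> bool" where
  "principal_angle_sines X Y t \<longleftrightarrow>
     (\<exists>s. singular_values_desc ((1\<^sub>m (dim_row X) - X * transpose_mat X) * Y) s \<and>
          (\<forall>i<dim_col Y. t i = s (dim_col Y - 1 - i)))"

definition cols_first :: "nat \<Rightarrow> real mat \<Rightarrow> real mat" where
  "cols_first k M = mat (dim_row M) k (\<lambda>(i,j). M $$ (i,j))"

definition cols_rest :: "nat \<Rightarrow> real mat \<Rightarrow> real mat" where
  "cols_rest k M = mat (dim_row M) (dim_col M - k) (\<lambda>(i,j). M $$ (i,j+k))"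

end

theory Submission
  imports Defs
begin


lemma sp_self_ge0: "(x::real vec) \<bullet> x \<ge> 0"
  unfolding scalar_prod_def by (auto intro: sum_nonneg)

lemma sp_self_sum: "(x::real vec) \<bullet> x = (\<Sum>i<dim_vec x. (x$i)^2)"
  unfolding scalar_prod_def by (auto intro!: sum.cong simp: power2_eq_square lessThan_atLeast0)

lemma vnorm_ge0: "vnorm x \<ge> 0" unfolding vnorm_def using sp_self_ge0 by simp

lemma orth_cols_norm:
  assumes U: "U \<in> carrier_mat a b" and o: "orth_cols U" and x: "x \<in> carrier_vec b"
  shows "(U *\<^sub>v x) \<bullet> (U *\<^sub>v x) = x \<bullet> (x::real vec)"
proof -
  have "(transpose_mat U *\<^sub>v (U *\<^sub>v x)) \<bullet> x = (U *\<^sub>v x) \<bullet> (U *\<^sub>v x)"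
    by (rule transpose_vec_mult_scalar[OF U x], insert U x, auto)
  moreover have "transpose_mat U *\<^sub>v (U *\<^sub>v x) = x"
    using o U x unfolding orth_cols_def
    by (metis assoc_mult_mat_vec carrier_matD(2) one_mult_mat_vec transpose_carrier_mat)
  ultimately show ?thesis by simp
qed

lemma orth_square_right:
  assumes U: "U \<in> carrier_mat a a" and o: "orth_cols U"
  shows "U * transpose_mat U = 1\<^sub>m a"
  using mat_mult_left_right_inverse[of "transpose_mat U" a U] U o unfolding orth_cols_def by auto

lemma proj_le:
  assumes Q: "Q \<in> carrier_mat m d" and o: "orth_cols Q" and u: "u \<in> carrier_vec m"
    and w: "w \<in> range_mat Q"
  shows "vnorm ((1\<^sub>m m - Q * transpose_mat Q) *\<^sub>v u) \<le> vnorm (u - (w::real vec))"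
proof -
  from w Q obtain v where v: "v \<in> carrier_vec d" and wv: "w = Q *\<^sub>v v"
    unfolding range_mat_def by auto
  define a where "a = u - w"
  have a: "a \<in> carrier_vec m" using u wv Q v a_def by auto
  have QtQ: "transpose_mat Q * Q = 1\<^sub>m d" using o Q unfolding orth_cols_def by auto
  have Qt: "transpose_mat Q \<in> carrier_mat d m" using Q by auto
  have "(1\<^sub>m m - Q * transpose_mat Q) *\<^sub>v u = u - Q *\<^sub>v (transpose_mat Q *\<^sub>v u)"
    using Q u by (simp add: minus_mult_distrib_mat_vec[of _ m m])
  also have "u - Q *\<^sub>v (transpose_mat Q *\<^sub>v u) = (a + Q *\<^sub>v v) - Q *\<^sub>v (transpose_mat Q *\<^sub>v (a + Q *\<^sub>v v))"
  proof -
    have "a + Q *\<^sub>v v = u" unfolding a_def wv using u Q v by (intro eq_vecI) auto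
    then show ?thesis by simp
  qed
  also have "transpose_mat Q *\<^sub>v (a + Q *\<^sub>v v) = transpose_mat Q *\<^sub>v a + v"
  proof -
    have "transpose_mat Q *\<^sub>v (a + Q *\<^sub>v v) = transpose_mat Q *\<^sub>v a + transpose_mat Q *\<^sub>v (Q *\<^sub>v v)"
      using Qt a Q v by (simp add: mult_add_distrib_mat_vec[OF Qt])
    also have "transpose_mat Q *\<^sub>v (Q *\<^sub>v v) = v"
      using assoc_mult_mat_vec[OF Qt Q v, symmetric] QtQ v by simp
    finally show ?thesis .
  qed
  also have "a + Q *\<^sub>v v - Q *\<^sub>v (transpose_mat Q *\<^sub>v a + v) = a - Q *\<^sub>v (transpose_mat Q *\<^sub>v a)"
    using Q Qt a v by (auto simp: mult_add_distrib_mat_vec[of _ m d])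
  finally have e: "(1\<^sub>m m - Q * transpose_mat Q) *\<^sub>v u = a - Q *\<^sub>v (transpose_mat Q *\<^sub>v a)" .
  define b where "b = transpose_mat Q *\<^sub>v a"
  have b: "b \<in> carrier_vec d" using b_def Qt a by auto
  have ab: "a \<bullet> (Q *\<^sub>v b) = b \<bullet> b"
    using transpose_vec_mult_scalar[OF Q b a] b_def comm_scalar_prod[OF b b] by simp
  have "(a - Q *\<^sub>v b) \<bullet> (a - Q *\<^sub>v b) = a \<bullet> a - 2 * (a \<bullet> (Q *\<^sub>v b)) + (Q *\<^sub>v b) \<bullet> (Q *\<^sub>v b)"
    using a Q b
    by (simp add: minus_scalar_prod_distrib[of _ m] scalar_prod_minus_distrib[of _ m]
        comm_scalar_prod[of "Q *\<^sub>v b" m a])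
  also have "\<dots> = a \<bullet> a - b \<bullet> b" using ab orth_cols_norm[OF Q o b] by simp
  also have "\<dots> \<le> a \<bullet> a" using sp_self_ge0[of b] by simp
  finally show ?thesis unfolding vnorm_def e a_def[symmetric] b_def[symmetric] by simp
qed

lemma wide_kernel:
  assumes B: "(B::real mat) \<in> carrier_mat a (Suc a)"
  shows "\<exists>v\<in>carrier_vec (Suc a). v \<noteq> 0\<^sub>v (Suc a) \<and> (\<forall>i<a. row B i \<bullet> v = 0)"
proof -
  define B' where "B' = mat\<^sub>r (Suc a) (Suc a) (\<lambda>i. if i = a then 0\<^sub>v (Suc a) else row B i)"
  have B'c: "B' \<in> carrier_mat (Suc a) (Suc a)" unfolding B'_def by auto
  have dc: "dim_col B = Suc a" using B by auto
  have rc: "(\<lambda>i. row B i) \<in> {0..<Suc a} \<rightarrow> carrier_vec (Suc a)"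
    using row_carrier[of B] dc by (intro Pi_I) metis
  have "det B' = 0" unfolding B'_def
    using det_row_0[of a "Suc a" "\<lambda>i. row B i", OF _ rc] by simp
  then obtain v where v: "v \<in> carrier_vec (Suc a)" "v \<noteq> 0\<^sub>v (Suc a)" "B' *\<^sub>v v = 0\<^sub>v (Suc a)"
    using det_0_iff_vec_prod_zero[OF B'c] by auto
  have "\<forall>i<a. row B i \<bullet> v = 0"
  proof (intro allI impI)
    fix i assume i: "i < a"
    have "(B' *\<^sub>v v) $ i = 0" using v(3) i by simp
    moreover have "(B' *\<^sub>v v) $ i = row B' i \<bullet> v" using i B'c by simp
    moreover have "row B' i = row B i" unfolding B'_def using i dc by (subst row_mat_of_row_fun) auto
    ultimately show "row B i \<bullet> v = 0" by simp
  qed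
  then show ?thesis using v(1) v(2) by blast
qed

lemma mv_index: "i < dim_row A \<Longrightarrow> dim_vec v = dim_col A \<Longrightarrow>
   (A *\<^sub>v v) $ i = (\<Sum>t<dim_col A. A $$ (i,t) * v $ t)"
  by (simp add: scalar_prod_def lessThan_atLeast0)

lemma sv_bound:
  fixes M :: "real mat"
  assumes M: "M \<in> carrier_mat m k" and km: "k \<le> m" and sv: "singular_values_desc M s"
    and i: "i < k" and b: "b \<ge> 0"
    and H: "\<And>x. x \<in> carrier_vec k \<Longrightarrow> (\<forall>l. i < l \<and> l < k \<longrightarrow> x $ l = 0) \<Longrightarrow>
             vnorm (M *\<^sub>v x) \<le> b * vnorm x"
  shows "s (k-1-i) \<le> b"
proof -
  obtain U' S' V' where svd: "is_svd M U' S' V'" and sS: "\<forall>i<min (dim_row M) (dim_col M). s i = S' $$ (i,i)"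
    using sv unfolding singular_values_desc_def by auto
  have dM: "dim_row M = m" "dim_col M = k" using M by auto
  have U': "U' \<in> carrier_mat m m" "orth_cols U'" and V': "V' \<in> carrier_mat k k" "orth_cols V'"
    and S': "S' \<in> carrier_mat m k"
    and off: "\<forall>a<m. \<forall>c<k. a \<noteq> c \<longrightarrow> S' $$ (a,c) = 0"
    and pos: "\<forall>a<k. S' $$ (a,a) \<ge> 0"
    and dec: "\<forall>a c. a \<le> c \<longrightarrow> c < k \<longrightarrow> S' $$ (c,c) \<le> S' $$ (a,a)"
    and Meq: "M = U' * S' * transpose_mat V'"
    using svd km unfolding is_svd_def orthogonal_mat_def dM by (auto simp: min_def)
  define j where "j = k - 1 - i"
  have jk: "j < k" "i + 1 + j = k" using i j_def by auto
  have sj: "s j = S' $$ (j,j)" using sS jk km dM by auto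
  define B where "B = mat j (Suc j) (\<lambda>(a,t). V' $$ (i+1+a, t))"
  have Bc: "B \<in> carrier_mat j (Suc j)" unfolding B_def by auto
  obtain y0 where y0: "y0 \<in> carrier_vec (Suc j)" "y0 \<noteq> 0\<^sub>v (Suc j)" "\<forall>a<j. row B a \<bullet> y0 = 0"
    using wide_kernel[OF Bc] by auto
  define y where "y = vec k (\<lambda>t. if t \<le> j then y0 $ t else 0)"
  have yc: "y \<in> carrier_vec k" unfolding y_def by auto
  obtain t0 where t0: "t0 < Suc j" "y0 $ t0 \<noteq> 0"
    using y0(1,2) by (metis carrier_vecD eq_vecI index_zero_vec(1) index_zero_vec(2))
  have yt0: "y $ t0 \<noteq> 0" using t0 jk unfolding y_def by auto
  have ypos: "y \<bullet> y > 0"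
  proof -
    have "y \<bullet> y = (\<Sum>t<k. (y$t)^2)" using sp_self_sum[of y] yc by simp
    also have "\<dots> \<ge> (y$t0)^2" using t0 jk
      by (intro member_le_sum) auto
    finally show ?thesis using yt0 by (smt (verit) zero_less_power2)
  qed
  define x where "x = V' *\<^sub>v y"
  have xc: "x \<in> carrier_vec k" unfolding x_def using V' yc by auto
  have supp: "\<forall>l. i < l \<and> l < k \<longrightarrow> x $ l = 0"
  proof (intro allI impI)
    fix l assume l: "i < l \<and> l < k"
    define a where "a = l - i - 1"
    have a: "a < j" "l = i + 1 + a" using l jk a_def by auto
    have "x $ l = (\<Sum>t<k. V' $$ (l,t) * y $ t)" unfolding x_def
      using mv_index[of l V' y] V' yc l by auto
    also have "\<dots> = (\<Sum>t<Suc j. V' $$ (l,t) * y $ t)"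
      using jk unfolding y_def by (intro sum.mono_neutral_right) auto
    also have "\<dots> = (\<Sum>t<Suc j. B $$ (a,t) * y0 $ t)"
      using jk a unfolding y_def B_def by (intro sum.cong) auto
    also have "\<dots> = row B a \<bullet> y0"
      using mv_index[of a B y0] Bc y0(1) a by (auto simp: scalar_prod_def lessThan_atLeast0)
    also have "\<dots> = 0" using y0(3) a by auto
    finally show "x $ l = 0" .
  qed
  have Vty: "transpose_mat V' *\<^sub>v x = y"
    unfolding x_def using V' yc unfolding orth_cols_def
    by (metis assoc_mult_mat_vec carrier_matD(2) one_mult_mat_vec transpose_carrier_mat)
  have Mx: "M *\<^sub>v x = U' *\<^sub>v (S' *\<^sub>v y)"
  proof -
    have "M *\<^sub>v x = (U' * S') *\<^sub>v (transpose_mat V' *\<^sub>v x)"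
      unfolding Meq using U' S' V' xc by (intro assoc_mult_mat_vec) auto
    also have "\<dots> = U' *\<^sub>v (S' *\<^sub>v y)" unfolding Vty using U' S' yc by auto
    finally show ?thesis .
  qed
  have Syc: "S' *\<^sub>v y \<in> carrier_vec m" using S' yc by auto
  have nMx: "(M *\<^sub>v x) \<bullet> (M *\<^sub>v x) = (S' *\<^sub>v y) \<bullet> (S' *\<^sub>v y)"
    unfolding Mx by (rule orth_cols_norm[OF U'(1,2) Syc])
  have nx: "x \<bullet> x = y \<bullet> y" unfolding x_def by (rule orth_cols_norm[OF V'(1,2) yc])
  have Sy_l: "(S' *\<^sub>v y) $ l = S' $$ (l,l) * y $ l" if l: "l < k" for l
  proof -
    have "(S' *\<^sub>v y) $ l = (\<Sum>t<k. S' $$ (l,t) * y $ t)"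
      using mv_index[of l S' y] S' yc l km by auto
    also have "\<dots> = (\<Sum>t<k. if t = l then S' $$ (l,l) * y $ t else 0)"
      using off l km by (intro sum.cong) auto
    also have "\<dots> = S' $$ (l,l) * y $ l" using l by simp
    finally show ?thesis .
  qed
  have low: "(s j)^2 * (y \<bullet> y) \<le> (S' *\<^sub>v y) \<bullet> (S' *\<^sub>v y)"
  proof -
    have "(s j)^2 * (y \<bullet> y) = (\<Sum>l<k. (s j)^2 * (y$l)^2)"
      using sp_self_sum[of y] yc by (simp add: sum_distrib_left)
    also have "\<dots> \<le> (\<Sum>l<k. ((S' *\<^sub>v y) $ l)^2)"
    proof (intro sum_mono)
      fix l assume l: "l \<in> {..<k}"
      show "(s j)^2 * (y$l)^2 \<le> ((S' *\<^sub>v y) $ l)^2"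
      proof (cases "l \<le> j")
        case True
        have "0 \<le> s j" "s j \<le> S' $$ (l,l)" using sj pos dec True jk by auto
        then have "(s j)^2 \<le> (S' $$ (l,l))^2" by (intro power_mono) auto
        then show ?thesis using Sy_l l by (simp add: power_mult_distrib mult_right_mono)
      next
        case False
        then show ?thesis unfolding y_def using l by simp
      qed
    qed
    also have "\<dots> \<le> (\<Sum>l<m. ((S' *\<^sub>v y) $ l)^2)"
      using km by (intro sum_mono2) auto
    also have "\<dots> = (S' *\<^sub>v y) \<bullet> (S' *\<^sub>v y)" using sp_self_sum[of "S' *\<^sub>v y"] Syc S' by simp
    finally show ?thesis .
  qed
  have "vnorm (M *\<^sub>v x) \<le> b * vnorm x" using H[OF xc supp] .
  then have "(vnorm (M *\<^sub>v x))^2 \<le> (b * vnorm x)^2"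
    using vnorm_ge0 by (intro power_mono) auto
  then have "(M *\<^sub>v x) \<bullet> (M *\<^sub>v x) \<le> b^2 * (x \<bullet> x)"
    unfolding vnorm_def using sp_self_ge0 by (simp add: power_mult_distrib)
  with low nMx nx have "(s j)^2 * (y \<bullet> y) \<le> b^2 * (y \<bullet> y)" by simp
  then have "(s j)^2 \<le> b^2" using ypos by simp
  then have "s j \<le> b" using power2_le_imp_le[OF _ b] by blast
  then show ?thesis unfolding j_def .
qed

lemma comp_le_vnorm: "t < dim_vec v \<Longrightarrow> \<bar>v $ t\<bar> \<le> vnorm v"
proof -
  assume t: "t < dim_vec v"
  have "(v$t)^2 \<le> (\<Sum>i<dim_vec v. (v$i)^2)" using t by (intro member_le_sum) auto
  then have "(v$t)^2 \<le> v \<bullet> v" using sp_self_sum[of v] by simp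
  then have "sqrt ((v$t)^2) \<le> sqrt (v \<bullet> v)" by (rule real_sqrt_le_mono)
  then show ?thesis unfolding vnorm_def real_sqrt_abs .
qed

lemma vnorm_smult: "vnorm (c \<cdot>\<^sub>v v) = \<bar>c\<bar> * vnorm (v::real vec)"
proof -
  have "(c \<cdot>\<^sub>v v) \<bullet> (c \<cdot>\<^sub>v v) = c^2 * (v \<bullet> v)"
    by (simp add: power2_eq_square)
  then show ?thesis unfolding vnorm_def by (simp add: real_sqrt_mult)
qed

lemma vnorm_zero_iff: "vnorm v = 0 \<longleftrightarrow> v = 0\<^sub>v (dim_vec (v::real vec))"
proof
  assume "vnorm v = 0"
  then have "\<forall>t<dim_vec v. v $ t = 0" using comp_le_vnorm by fastforce
  then show "v = 0\<^sub>v (dim_vec v)" by (intro eq_vecI) auto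
next
  assume "v = 0\<^sub>v (dim_vec v)"
  then have "v \<bullet> v = 0" by (metis carrier_vec_dim_vec scalar_prod_left_zero)
  then show "vnorm v = 0" unfolding vnorm_def by simp
qed

lemma norm2_bdd:
  assumes M: "(M::real mat) \<in> carrier_mat a b"
  shows "bdd_above {vnorm (M *\<^sub>v x) | x. x \<in> carrier_vec (dim_col M) \<and> vnorm x \<le> 1}"
proof -
  define C where "C = sqrt (\<Sum>i<a. (\<Sum>t<b. \<bar>M $$ (i,t)\<bar>)^2)"
  have "vnorm (M *\<^sub>v x) \<le> C" if x: "x \<in> carrier_vec b" "vnorm x \<le> 1" for x
  proof -
    have ci: "\<bar>(M *\<^sub>v x) $ i\<bar> \<le> (\<Sum>t<b. \<bar>M $$ (i,t)\<bar>)" if i: "i < a" for i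
    proof -
      have "(M *\<^sub>v x) $ i = (\<Sum>t<b. M $$ (i,t) * x $ t)"
        using mv_index[of i M x] M x i by auto
      also have "\<bar>\<dots>\<bar> \<le> (\<Sum>t<b. \<bar>M $$ (i,t) * x $ t\<bar>)" by (rule sum_abs)
      also have "\<dots> \<le> (\<Sum>t<b. \<bar>M $$ (i,t)\<bar>)"
      proof (intro sum_mono)
        fix t assume t: "t \<in> {..<b}"
        have "\<bar>x $ t\<bar> \<le> 1" using comp_le_vnorm[of t x] x t by auto
        then show "\<bar>M $$ (i,t) * x $ t\<bar> \<le> \<bar>M $$ (i,t)\<bar>"
          by (simp add: abs_mult mult_left_le)
      qed
      finally show ?thesis .
    qed
    have "(M *\<^sub>v x) \<bullet> (M *\<^sub>v x) = (\<Sum>i<a. ((M *\<^sub>v x) $ i)^2)"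
      using sp_self_sum[of "M *\<^sub>v x"] M by simp
    also have "\<dots> \<le> (\<Sum>i<a. (\<Sum>t<b. \<bar>M $$ (i,t)\<bar>)^2)"
    proof (intro sum_mono)
      fix i assume "i \<in> {..<a}"
      then have "\<bar>(M *\<^sub>v x) $ i\<bar> \<le> (\<Sum>t<b. \<bar>M $$ (i,t)\<bar>)" using ci by auto
      then show "((M *\<^sub>v x) $ i)^2 \<le> (\<Sum>t<b. \<bar>M $$ (i,t)\<bar>)^2"
        by (metis abs_ge_zero power2_abs power_mono)
    qed
    finally show ?thesis unfolding vnorm_def C_def by simp
  qed
  note C = this
  show ?thesis
  proof (rule bdd_aboveI[where M=C])
    fix y assume "y \<in> {vnorm (M *\<^sub>v x) | x. x \<in> carrier_vec (dim_col M) \<and> vnorm x \<le> 1}"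
    then obtain x where "y = vnorm (M *\<^sub>v x)" "x \<in> carrier_vec b" "vnorm x \<le> 1"
      using M by auto
    then show "y \<le> C" using C by metis
  qed
qed

lemma norm2_upper:
  assumes M: "(M::real mat) \<in> carrier_mat a b" and x: "x \<in> carrier_vec b" and n: "vnorm x \<le> 1"
  shows "vnorm (M *\<^sub>v x) \<le> norm2 M"
proof -
  have "vnorm (M *\<^sub>v x) \<in> {vnorm (M *\<^sub>v x) | x. x \<in> carrier_vec (dim_col M) \<and> vnorm x \<le> 1}"
    using M x n by blast
  from cSup_upper[OF this norm2_bdd[OF M]] show ?thesis unfolding norm2_def .
qed

lemma norm2_nonneg:
  assumes M: "(M::real mat) \<in> carrier_mat a b"
  shows "norm2 M \<ge> 0"
proof -
  have z: "vnorm (0\<^sub>v b) = 0" using vnorm_zero_iff[of "0\<^sub>v b"] by simp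
  have "M *\<^sub>v 0\<^sub>v b = 0\<^sub>v a" using M by auto
  then have "vnorm (M *\<^sub>v 0\<^sub>v b) = 0" using vnorm_zero_iff[of "0\<^sub>v a"] by simp
  then show ?thesis using norm2_upper[OF M zero_carrier_vec[of b]] z by simp
qed

lemma norm2_bound:
  assumes M: "(M::real mat) \<in> carrier_mat a b" and x: "x \<in> carrier_vec b"
  shows "vnorm (M *\<^sub>v x) \<le> norm2 M * vnorm x"
proof (cases "vnorm x = 0")
  case True
  then have "x = 0\<^sub>v b" using vnorm_zero_iff[of x] x by auto
  then have "M *\<^sub>v x = 0\<^sub>v a" using M by auto
  then have "vnorm (M *\<^sub>v x) = 0" using vnorm_zero_iff[of "0\<^sub>v a"] by simp
  then show ?thesis using True by simp
next
  case False
  define n where "n = vnorm x"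
  have n: "n > 0" using False vnorm_ge0[of x] n_def by auto
  define v where "v = (1/n) \<cdot>\<^sub>v x"
  have vc: "v \<in> carrier_vec b" using x v_def by auto
  have vn: "vnorm v = 1" unfolding v_def vnorm_smult n_def[symmetric] using n by simp
  have Mv: "M *\<^sub>v v = (1/n) \<cdot>\<^sub>v (M *\<^sub>v x)" unfolding v_def using mult_mat_vec[OF M x] by simp
  have "vnorm (M *\<^sub>v v) \<le> norm2 M" using norm2_upper[OF M vc] vn by simp
  then have "vnorm (M *\<^sub>v x) / n \<le> norm2 M" unfolding Mv vnorm_smult using n by simp
  then show ?thesis using n n_def by (simp add: divide_le_eq mult.commute)
qed

lemma (in vec_space) full_row_rank_right_inv:
  assumes F: "F \<in> carrier_mat n d" and r: "rank F = n"
  shows "\<exists>R. R \<in> carrier_mat d n \<and> F * R = 1\<^sub>m n"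
proof -
  obtain S where max: "maximal S (\<lambda>T. T \<subseteq> set (cols F) \<and> lin_indpt T)"
    using maximal_exists[of "(\<lambda>T. T \<subseteq> set (cols F) \<and> lin_indpt T)" "card (set (cols F))" "{}"]
    by (meson List.finite_set card_mono empty_iff empty_subsetI finite_lin_indpt2 rev_finite_subset)
  have SF: "S \<subseteq> set (cols F)" and li: "lin_indpt S" using max unfolding maximal_def by auto
  have cS: "card S = n" using rank_card_indpt[OF F max] r by simp
  have fS: "finite S" using SF finite_subset by blast
  obtain L where L: "set L = S" "distinct L" using finite_distinct_list[OF fS] by blast
  have lenL: "length L = n" using L cS distinct_card by fastforce
  have Lc: "set L \<subseteq> carrier_vec n" using L SF cols_dim F by fastforce
  define G where "G = mat_of_cols n L"
  have Gc: "G \<in> carrier_mat n n" unfolding G_def using lenL mat_of_cols_carrier(1)[of n L] by simp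
  have cG: "cols G = L" unfolding G_def using Lc by simp
  have "rank G = n" using lin_indpt_full_rank[OF Gc] cG L li by simp
  then have "det G \<noteq> 0" using det_rank_iff[OF Gc] by simp
  then obtain Gi where Gi: "Gi \<in> carrier_mat n n" "G * Gi = 1\<^sub>m n"
    using det_non_zero_imp_unit[OF Gc, of undefined] unfolding Units_def ring_mat_def by auto
  have ex: "\<forall>c<n. \<exists>j<d. L ! c = col F j"
  proof (intro allI impI)
    fix c assume c: "c < n"
    then have "L ! c \<in> set (cols F)" using L SF lenL nth_mem by blast
    then obtain j where "j < length (cols F)" "L ! c = cols F ! j" by (metis in_set_conv_nth)
    then show "\<exists>j<d. L ! c = col F j" using F by auto
  qed
  define \<sigma> where "\<sigma> = (\<lambda>c. SOME j. j < d \<and> L ! c = col F j)"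
  have sig: "\<sigma> c < d \<and> L ! c = col F (\<sigma> c)" if "c < n" for c
    using someI_ex[OF ex[rule_format, OF that]] unfolding \<sigma>_def by blast
  define E where "E = mat d n (\<lambda>(r,c). if r = \<sigma> c then (1::'a) else 0)"
  have Ec: "E \<in> carrier_mat d n" unfolding E_def by auto
  have FE: "F * E = G"
  proof (rule eq_matI)
    show "dim_row (F * E) = dim_row G" "dim_col (F * E) = dim_col G" using F Ec Gc by auto
    fix i c assume i: "i < dim_row G" and c: "c < dim_col G"
    have i': "i < n" and c': "c < n" using i c Gc by auto
    have "(F * E) $$ (i,c) = (\<Sum>r<d. F $$ (i,r) * E $$ (r,c))"
      using F Ec i' c' by (simp add: scalar_prod_def lessThan_atLeast0)
    also have "\<dots> = (\<Sum>r<d. if r = \<sigma> c then F $$ (i,r) else 0)"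
      using c' unfolding E_def by (intro sum.cong) auto
    also have "\<dots> = F $$ (i, \<sigma> c)" using sig[OF c'] by simp
    also have "\<dots> = col F (\<sigma> c) $ i" using F i' sig[OF c'] by simp
    also have "\<dots> = L ! c $ i" using sig[OF c'] by simp
    also have "\<dots> = G $$ (i,c)" unfolding G_def using i' c' lenL Lc
      by (simp add: mat_of_cols_def)
    finally show "(F * E) $$ (i,c) = G $$ (i,c)" .
  qed
  have "F * (E * Gi) = 1\<^sub>m n" using FE Gi F Ec
    by (metis assoc_mult_mat)
  then show ?thesis using Ec Gi by (intro exI[of _ "E * Gi"]) auto
qed


lemma pinv_full_row:
  fixes F :: "real mat"
  assumes F: "F \<in> carrier_mat k d" and r: "vec_space.rank k F = k"
  shows "pinv F \<in> carrier_mat d k \<and> F * pinv F = 1\<^sub>m k"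
proof -
  obtain R where R: "R \<in> carrier_mat d k" "F * R = 1\<^sub>m k"
    using vec_space.full_row_rank_right_inv[OF F r] by blast
  have Ft: "transpose_mat F \<in> carrier_mat d k" using F by simp
  have FX: "F * X = 1\<^sub>m k" if X: "is_pinv F X" for X
  proof -
    have Xc: "X \<in> carrier_mat d k" and FXF: "F * X * F = F" using X F unfolding is_pinv_def by auto
    have FXc: "F * X \<in> carrier_mat k k" using F Xc by simp
    have "F * X = F * X * (F * R)" unfolding R(2) using right_mult_one_mat[OF FXc] by simp
    also have "\<dots> = F * X * F * R" using assoc_mult_mat[OF FXc F R(1), symmetric] .
    also have "\<dots> = 1\<^sub>m k" using FXF R by simp
    finally show ?thesis .
  qed
  have uniq: "X = Y" if X: "is_pinv F X" and Y: "is_pinv F Y" for X Y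
  proof -
    have Xc: "X \<in> carrier_mat d k" and Yc: "Y \<in> carrier_mat d k"
      and sX: "transpose_mat (X * F) = X * F" and sY: "transpose_mat (Y * F) = Y * F"
      using X Y F unfolding is_pinv_def by auto
    have FXI: "F * X = 1\<^sub>m k" and FYI: "F * Y = 1\<^sub>m k" using FX X Y by auto
    have XFc: "X * F \<in> carrier_mat d d" and YFc: "Y * F \<in> carrier_mat d d" using Xc Yc F by auto
    have "X * F = X * (F * Y) * F" unfolding FYI using right_mult_one_mat[OF Xc] by simp
    also have "\<dots> = (X * F) * (Y * F)"
      using assoc_mult_mat[OF Xc F Yc] assoc_mult_mat[OF XFc Yc F] by simp
    also have "\<dots> = transpose_mat (X * F) * transpose_mat (Y * F)" using sX sY by simp
    also have "\<dots> = transpose_mat ((Y * F) * (X * F))" using transpose_mult[OF YFc XFc] by simp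
    also have "(Y * F) * (X * F) = Y * (F * X) * F"
      using assoc_mult_mat[OF Yc F Xc] assoc_mult_mat[OF YFc Xc F] by simp
    also have "\<dots> = Y * F" unfolding FXI using right_mult_one_mat[OF Yc] by simp
    finally have XFYF: "X * F = Y * F" using sY by simp
    have "X = X * (F * Y)" unfolding FYI using right_mult_one_mat[OF Xc] by simp
    also have "\<dots> = (X * F) * Y" using assoc_mult_mat[OF Xc F Yc] by simp
    also have "\<dots> = Y * (F * Y)" unfolding XFYF using assoc_mult_mat[OF Yc F Yc] by simp
    also have "\<dots> = Y" unfolding FYI using right_mult_one_mat[OF Yc] by simp
    finally show ?thesis .
  qed
  define G where "G = F * transpose_mat F"
  have Gc: "G \<in> carrier_mat k k" unfolding G_def using F by simp
  have Gt: "transpose_mat G = G" unfolding G_def using transpose_mult[OF F Ft] by simp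
  have "det G \<noteq> 0"
  proof
    assume "det G = 0"
    then obtain v where v: "v \<in> carrier_vec k" "v \<noteq> 0\<^sub>v k" "G *\<^sub>v v = 0\<^sub>v k"
      using det_0_iff_vec_prod_zero[OF Gc] by auto
    define w where "w = transpose_mat F *\<^sub>v v"
    have wc: "w \<in> carrier_vec d" unfolding w_def using Ft v by auto
    have "F *\<^sub>v w = 0\<^sub>v k" unfolding w_def using v(3) F Ft v(1) unfolding G_def by simp
    then have "w \<bullet> w = 0"
      using transpose_vec_mult_scalar[OF F wc v(1)] unfolding w_def[symmetric]
      using scalar_prod_right_zero[OF v(1)] by simp
    then have "w = 0\<^sub>v d" using vnorm_zero_iff[of w] wc unfolding vnorm_def by auto
    then have "transpose_mat R *\<^sub>v w = 0\<^sub>v k" using R by auto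
    moreover have "transpose_mat R *\<^sub>v w = v"
    proof -
      have "transpose_mat R *\<^sub>v w = (transpose_mat R * transpose_mat F) *\<^sub>v v"
        unfolding w_def using R Ft v by simp
      also have "transpose_mat R * transpose_mat F = transpose_mat (F * R)"
        using transpose_mult[OF F R(1)] by simp
      also have "\<dots> = 1\<^sub>m k" using R by simp
      finally show ?thesis using v by simp
    qed
    ultimately show False using v(2) by simp
  qed
  then obtain K where K: "K \<in> carrier_mat k k" "G * K = 1\<^sub>m k" "K * G = 1\<^sub>m k"
    using det_non_zero_imp_unit[OF Gc, of undefined] unfolding Units_def ring_mat_def by auto
  have Kt: "transpose_mat K = K"
  proof -
    have "transpose_mat K * G = 1\<^sub>m k"
      using transpose_mult[OF Gc K(1)] K Gt by (metis transpose_one)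
    then have "transpose_mat K = transpose_mat K * (G * K)" using K by simp
    also have "\<dots> = (transpose_mat K * G) * K" using assoc_mult_mat[of "transpose_mat K" k k G k K k] K Gc by simp
    also have "\<dots> = K" using \<open>transpose_mat K * G = 1\<^sub>m k\<close> K by simp
    finally show ?thesis .
  qed
  define X0 where "X0 = transpose_mat F * K"
  have X0c: "X0 \<in> carrier_mat d k" unfolding X0_def using Ft K by simp
  have FX0: "F * X0 = 1\<^sub>m k" unfolding X0_def
    using assoc_mult_mat[OF F Ft K(1), symmetric] K(2) unfolding G_def by simp
  have X0F: "transpose_mat (X0 * F) = X0 * F"
  proof -
    have "transpose_mat (X0 * F) = transpose_mat F * transpose_mat X0" using transpose_mult[OF X0c F] by simp
    also have "transpose_mat X0 = K * F" unfolding X0_def using transpose_mult[OF Ft K(1)] Kt by simp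
    also have "transpose_mat F * (K * F) = X0 * F" unfolding X0_def
      using assoc_mult_mat[OF Ft K(1) F] by simp
    finally show ?thesis .
  qed
  have p0: "is_pinv F X0"
    unfolding is_pinv_def using X0c FX0 X0F F by auto
  have "pinv F = X0" unfolding pinv_def using p0 uniq by blast
  then show ?thesis using X0c FX0 by simp
qed

lemma key_alg:
  fixes \<tau> :: real assumes t: "\<tau> \<ge> 0"
  shows "(1 - 1/(1+\<tau>^2))^2 + (1/(1+\<tau>^2))^2 * \<tau>^2 = \<tau>^2 / (1 + \<tau>^2)"
proof -
  define u where "u = \<tau>^2"
  have p: "1 + u > 0" unfolding u_def by (simp add: add_pos_nonneg)
  have a: "1 - 1/(1+u) = u/(1+u)" using p by (simp add: field_simps)
  have "(u/(1+u))^2 + (1/(1+u))^2 * u = (u^2 + u) / (1+u)^2"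
    by (simp add: power_divide add_divide_distrib)
  also have "\<dots> = u * (1+u) / ((1+u) * (1+u))" by (simp add: power2_eq_square algebra_simps)
  also have "\<dots> = u / (1+u)" using p by simp
  finally show ?thesis unfolding u_def[symmetric] a .
qed

lemma cols_first_mult:
  assumes Y: "(Y::real mat) \<in> carrier_mat N N" and k: "k \<le> N" and x: "x \<in> carrier_vec k"
  shows "cols_first k Y *\<^sub>v x = Y *\<^sub>v vec N (\<lambda>l. if l < k then x $ l else 0)"
proof (rule eq_vecI)
  show "dim_vec (cols_first k Y *\<^sub>v x) = dim_vec (Y *\<^sub>v vec N (\<lambda>l. if l < k then x $ l else 0))"
    using Y unfolding cols_first_def by simp
  fix a assume "a < dim_vec (Y *\<^sub>v vec N (\<lambda>l. if l < k then x $ l else 0))"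
  then have a: "a < N" using Y by simp
  have "(cols_first k Y *\<^sub>v x) $ a = (\<Sum>t<k. Y $$ (a,t) * x $ t)"
    using mv_index[of a "cols_first k Y" x] a x Y unfolding cols_first_def by auto
  also have "\<dots> = (\<Sum>t<N. Y $$ (a,t) * (vec N (\<lambda>l. if l < k then x $ l else 0)) $ t)"
    using k by (intro sum.mono_neutral_cong_left) auto
  also have "\<dots> = (Y *\<^sub>v vec N (\<lambda>l. if l < k then x $ l else 0)) $ a"
    using mv_index[of a Y] a Y by auto
  finally show "(cols_first k Y *\<^sub>v x) $ a = (Y *\<^sub>v vec N (\<lambda>l. if l < k then x $ l else 0)) $ a" .
qed

lemma angle_bound:
  fixes X Y :: "real mat"
  assumes X: "X \<in> carrier_mat N dX" and Xo: "orth_cols X"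
    and Y: "Y \<in> carrier_mat N N" and Yo: "orth_cols Y"
    and kN: "k \<le> N" and i: "i < k" and tau: "\<tau> \<ge> 0"
    and H: "\<And>x. x \<in> carrier_vec k \<Longrightarrow> (\<forall>l. i < l \<and> l < k \<longrightarrow> x $ l = 0) \<Longrightarrow>
       \<exists>r\<in>carrier_vec N. Y *\<^sub>v r \<in> range_mat X \<and> (\<forall>l<k. r $ l = x $ l) \<and>
          (\<Sum>l\<in>{k..<N}. (r $ l)^2) \<le> \<tau>^2 * (x \<bullet> x)"
    and pa: "principal_angle_sines X (cols_first k Y) t"
  shows "t i \<le> \<tau> / sqrt (1 + \<tau>^2)"
proof -
  define Yk where "Yk = cols_first k Y"
  have Ykc: "Yk \<in> carrier_mat N k" unfolding Yk_def cols_first_def using Y by auto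
  define M where "M = (1\<^sub>m N - X * transpose_mat X) * Yk"
  have Mc: "M \<in> carrier_mat N k" unfolding M_def using X Ykc by auto
  obtain s where sv: "singular_values_desc M s" and ts: "\<forall>l<k. t l = s (k - 1 - l)"
    using pa X Ykc unfolding principal_angle_sines_def M_def Yk_def by auto
  define b where "b = \<tau> / sqrt (1 + \<tau>^2)"
  have p: "1 + \<tau>^2 > 0" by (simp add: add_pos_nonneg)
  have b0: "b \<ge> 0" unfolding b_def using tau by simp
  have "s (k-1-i) \<le> b"
  proof (rule sv_bound[OF Mc kN sv i b0])
    fix x :: "real vec" assume x: "x \<in> carrier_vec k" and sup: "\<forall>l. i < l \<and> l < k \<longrightarrow> x $ l = 0"
    obtain r :: "real vec" where r: "r \<in> carrier_vec N" "Y *\<^sub>v r \<in> range_mat X" "\<forall>l<k. r $ l = x $ l"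
      "(\<Sum>l\<in>{k..<N}. (r $ l)^2) \<le> \<tau>^2 * (x \<bullet> x)" using H[OF x sup] by blast
    define xt where "xt = vec N (\<lambda>l. if l < k then x $ l else 0)"
    have xtc: "xt \<in> carrier_vec N" unfolding xt_def by simp
    have Ykx: "Yk *\<^sub>v x = Y *\<^sub>v xt" unfolding Yk_def xt_def by (rule cols_first_mult[OF Y kN x])
    define c where "c = 1 / (1 + \<tau>^2)"
    define w where "w = c \<cdot>\<^sub>v (Y *\<^sub>v r)"
    have wr: "w \<in> range_mat X"
    proof -
      obtain v where v: "v \<in> carrier_vec dX" "Y *\<^sub>v r = X *\<^sub>v v" using r(2) X unfolding range_mat_def by auto
      have "w = X *\<^sub>v (c \<cdot>\<^sub>v v)" unfolding w_def v(2) using mult_mat_vec[OF X v(1)] by simp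
      then show ?thesis unfolding range_mat_def using v(1) X by auto
    qed
    have Mx: "M *\<^sub>v x = (1\<^sub>m N - X * transpose_mat X) *\<^sub>v (Y *\<^sub>v xt)"
      unfolding M_def Ykx[symmetric] using X Ykc x by (intro assoc_mult_mat_vec) auto
    have YxtC: "Y *\<^sub>v xt \<in> carrier_vec N" using Y xtc by auto
    have "vnorm (M *\<^sub>v x) \<le> vnorm (Y *\<^sub>v xt - w)"
      unfolding Mx by (rule proj_le[OF X Xo YxtC wr])
    also have "Y *\<^sub>v xt - w = Y *\<^sub>v (xt - c \<cdot>\<^sub>v r)"
      unfolding w_def using Y xtc r(1)
      by (simp add: mult_minus_distrib_mat_vec mult_mat_vec)
    also have "vnorm \<dots> = vnorm (xt - c \<cdot>\<^sub>v r)"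
      unfolding vnorm_def using orth_cols_norm[OF Y Yo, of "xt - c \<cdot>\<^sub>v r"] xtc r(1) by simp
    also have "\<dots> \<le> b * vnorm x"
    proof -
      define z where "z = xt - c \<cdot>\<^sub>v r"
      have zc: "z \<in> carrier_vec N" unfolding z_def using xtc r(1) by simp
      have zl: "z $ l = (1 - c) * x $ l" if "l < k" for l
        using that kN r(3) r(1) unfolding z_def xt_def by (simp add: algebra_simps)
      have zh: "z $ l = - c * r $ l" if "k \<le> l" "l < N" for l
        using that r(1) unfolding z_def xt_def by simp
      have "z \<bullet> z = (\<Sum>l<N. (z$l)^2)" using sp_self_sum[of z] zc by simp
      also have "\<dots> = (\<Sum>l\<in>{0..<k}. (z$l)^2) + (\<Sum>l\<in>{k..<N}. (z$l)^2)"
        using kN by (simp add: lessThan_atLeast0 sum.atLeastLessThan_concat)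
      also have "(\<Sum>l\<in>{0..<k}. (z$l)^2) = (1-c)^2 * (x \<bullet> x)"
      proof -
        have "(\<Sum>l\<in>{0..<k}. (z$l)^2) = (\<Sum>l\<in>{0..<k}. (1-c)^2 * (x$l)^2)"
          using zl by (intro sum.cong) (auto simp: power_mult_distrib)
        also have "\<dots> = (1-c)^2 * (x \<bullet> x)"
          using sp_self_sum[of x] x by (simp add: sum_distrib_left lessThan_atLeast0)
        finally show ?thesis .
      qed
      also have "(\<Sum>l\<in>{k..<N}. (z$l)^2) = c^2 * (\<Sum>l\<in>{k..<N}. (r$l)^2)"
        using zh by (simp add: sum_distrib_left power_mult_distrib)
      also have "c^2 * (\<Sum>l\<in>{k..<N}. (r$l)^2) \<le> c^2 * (\<tau>^2 * (x \<bullet> x))"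
        using r(4) by (intro mult_left_mono) auto
      finally have "z \<bullet> z \<le> ((1-c)^2 + c^2 * \<tau>^2) * (x \<bullet> x)" by (simp add: algebra_simps)
      also have "(1-c)^2 + c^2 * \<tau>^2 = \<tau>^2 / (1 + \<tau>^2)" unfolding c_def by (rule key_alg[OF tau])
      finally have zz: "z \<bullet> z \<le> \<tau>^2 / (1 + \<tau>^2) * (x \<bullet> x)" .
      have "sqrt (z \<bullet> z) \<le> sqrt (\<tau>^2 / (1 + \<tau>^2) * (x \<bullet> x))" using zz by (rule real_sqrt_le_mono)
      also have "\<dots> = b * sqrt (x \<bullet> x)" unfolding b_def using tau
        by (simp add: real_sqrt_mult real_sqrt_divide)
      finally show ?thesis unfolding vnorm_def z_def .
    qed
    finally show "vnorm (M *\<^sub>v x) \<le> b * vnorm x" .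
  qed
  then show ?thesis using ts i unfolding b_def by simp
qed

context
  fixes A U S V :: "real mat" and m n :: nat
  assumes A: "A \<in> carrier_mat m n" and mn: "n \<le> m"
    and U: "U \<in> carrier_mat m m" and Uo: "orth_cols U"
    and V: "V \<in> carrier_mat n n" and Vo: "orth_cols V"
    and S: "S \<in> carrier_mat m n"
    and off: "\<forall>i<m. \<forall>j<n. i \<noteq> j \<longrightarrow> S $$ (i,j) = 0"
    and AU: "A = U * S * transpose_mat V"
begin

lemma St_index: "u \<in> carrier_vec m \<Longrightarrow> l < n \<Longrightarrow> (transpose_mat S *\<^sub>v u) $ l = S $$ (l,l) * u $ l"
proof -
  assume u: "u \<in> carrier_vec m" and l: "l < n"
  have "(transpose_mat S *\<^sub>v u) $ l = (\<Sum>t<m. S $$ (t,l) * u $ t)"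
    using mv_index[of l "transpose_mat S" u] S u l by auto
  also have "\<dots> = (\<Sum>t<m. if t = l then S $$ (l,l) * u $ t else 0)"
    using off l mn by (intro sum.cong) auto
  also have "\<dots> = S $$ (l,l) * u $ l" using l mn by simp
  finally show ?thesis .
qed

lemma S_index: "y \<in> carrier_vec n \<Longrightarrow> l < m \<Longrightarrow> (S *\<^sub>v y) $ l = (if l < n then S $$ (l,l) * y $ l else 0)"
proof -
  assume y: "y \<in> carrier_vec n" and l: "l < m"
  have "(S *\<^sub>v y) $ l = (\<Sum>t<n. S $$ (l,t) * y $ t)"
    using mv_index[of l S y] S y l by auto
  also have "\<dots> = (\<Sum>t<n. if t = l then S $$ (l,l) * y $ t else 0)"
    using off l by (intro sum.cong) auto
  also have "\<dots> = (if l < n then S $$ (l,l) * y $ l else 0)" by simp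
  finally show ?thesis .
qed

lemma Ut_U: "u \<in> carrier_vec m \<Longrightarrow> transpose_mat U *\<^sub>v (U *\<^sub>v u) = u"
  using U Uo unfolding orth_cols_def
  by (metis assoc_mult_mat_vec carrier_matD(2) one_mult_mat_vec transpose_carrier_mat)

lemma Vt_V: "y \<in> carrier_vec n \<Longrightarrow> transpose_mat V *\<^sub>v (V *\<^sub>v y) = y"
  using V Vo unfolding orth_cols_def
  by (metis assoc_mult_mat_vec carrier_matD(2) one_mult_mat_vec transpose_carrier_mat)

lemma V_Vt: "y \<in> carrier_vec n \<Longrightarrow> V *\<^sub>v (transpose_mat V *\<^sub>v y) = y"
  using orth_square_right[OF V Vo] V
  by (metis assoc_mult_mat_vec one_mult_mat_vec transpose_carrier_mat)

lemma U_Ut: "y \<in> carrier_vec m \<Longrightarrow> U *\<^sub>v (transpose_mat U *\<^sub>v y) = y"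
  using orth_square_right[OF U Uo] U
  by (metis assoc_mult_mat_vec one_mult_mat_vec transpose_carrier_mat)

lemma At_eq: "transpose_mat A = V * transpose_mat S * transpose_mat U"
proof -
  have "transpose_mat A = transpose_mat (U * S * transpose_mat V)" using AU by simp
  also have "\<dots> = V * transpose_mat (U * S)"
    using transpose_mult[of "U * S" m n "transpose_mat V" n] U S V by simp
  also have "transpose_mat (U * S) = transpose_mat S * transpose_mat U"
    using transpose_mult[OF U S] .
  finally show ?thesis using V S U by (simp add: assoc_mult_mat[of V n n _ n _ m])
qed

lemma A_act: "y \<in> carrier_vec n \<Longrightarrow> A *\<^sub>v (V *\<^sub>v y) = U *\<^sub>v (S *\<^sub>v y)"
proof -
  assume y: "y \<in> carrier_vec n"
  have "A *\<^sub>v (V *\<^sub>v y) = (U * S) *\<^sub>v (transpose_mat V *\<^sub>v (V *\<^sub>v y))"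
    unfolding AU using U S V y by (intro assoc_mult_mat_vec) auto
  also have "\<dots> = U *\<^sub>v (S *\<^sub>v y)" using Vt_V[OF y] U S y by simp
  finally show ?thesis .
qed

lemma At_act: "u \<in> carrier_vec m \<Longrightarrow> A\<^sup>T *\<^sub>v (U *\<^sub>v u) = V *\<^sub>v (transpose_mat S *\<^sub>v u)"
proof -
  assume u: "u \<in> carrier_vec m"
  have "transpose_mat A *\<^sub>v (U *\<^sub>v u) = (V * transpose_mat S) *\<^sub>v (transpose_mat U *\<^sub>v (U *\<^sub>v u))"
    unfolding At_eq using U S V u by (intro assoc_mult_mat_vec) auto
  also have "\<dots> = V *\<^sub>v (transpose_mat S *\<^sub>v u)" using Ut_U[OF u] V S u by simp
  finally show ?thesis .
qed

definition D :: "nat \<Rightarrow> real vec \<Rightarrow> real vec" where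
  "D e y = vec n (\<lambda>l. S $$ (l,l) ^ e * y $ l)"

lemma D_carrier: "D e y \<in> carrier_vec n" unfolding D_def by simp

lemma AtA_act: "y \<in> carrier_vec n \<Longrightarrow> (transpose_mat A * A) *\<^sub>v (V *\<^sub>v y) = V *\<^sub>v D 2 y"
proof -
  assume y: "y \<in> carrier_vec n"
  have Syc: "S *\<^sub>v y \<in> carrier_vec m" using S y by auto
  have "(transpose_mat A * A) *\<^sub>v (V *\<^sub>v y) = transpose_mat A *\<^sub>v (A *\<^sub>v (V *\<^sub>v y))"
    using A V y by (intro assoc_mult_mat_vec) auto
  also have "\<dots> = V *\<^sub>v (transpose_mat S *\<^sub>v (S *\<^sub>v y))" unfolding A_act[OF y] by (rule At_act[OF Syc])
  also have "transpose_mat S *\<^sub>v (S *\<^sub>v y) = D 2 y"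
  proof (rule eq_vecI)
    fix l assume "l < dim_vec (D 2 y)"
    then have l: "l < n" unfolding D_def by simp
    have "(S *\<^sub>v y) $ l = S $$ (l,l) * y $ l" using S_index[OF y, of l] l mn by simp
    then show "(transpose_mat S *\<^sub>v (S *\<^sub>v y)) $ l = D 2 y $ l"
      unfolding St_index[OF Syc l] using l mn
      by (simp add: D_def power2_eq_square)
  qed (use S in \<open>simp add: D_def\<close>)
  finally show ?thesis .
qed

lemma D_comp: "D a (D b y) = D (a + b) y"
  unfolding D_def by (intro eq_vecI) (auto simp: power_add)

lemma pow_act: "y \<in> carrier_vec n \<Longrightarrow> ((transpose_mat A * A) ^\<^sub>m q) *\<^sub>v (V *\<^sub>v y) = V *\<^sub>v D (2*q) y"
proof (induction q arbitrary: y)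
  case 0
  have "D 0 y = y" unfolding D_def using 0 by (intro eq_vecI) auto
  then show ?case using 0 V A by simp
next
  case (Suc q)
  have AA: "transpose_mat A * A \<in> carrier_mat n n" using A by simp
  have "((transpose_mat A * A) ^\<^sub>m Suc q) *\<^sub>v (V *\<^sub>v y)
      = ((transpose_mat A * A) ^\<^sub>m q) *\<^sub>v ((transpose_mat A * A) *\<^sub>v (V *\<^sub>v y))"
    using AA V Suc.prems by (simp add: assoc_mult_mat_vec[of _ n n _ n])
  also have "\<dots> = V *\<^sub>v D (2*q) (D 2 y)" unfolding AtA_act[OF Suc.prems] by (rule Suc.IH[OF D_carrier])
  also have "D (2*q) (D 2 y) = D (2 * Suc q) y" by (simp add: D_comp)
  finally show ?case .
qed

lemma w_form:
  assumes Phi: "Phi \<in> carrier_mat m d" and z: "z \<in> carrier_vec d"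
  shows "((transpose_mat A * A) ^\<^sub>m q * transpose_mat A * Phi) *\<^sub>v z
     = V *\<^sub>v D (2*q+1) (vec n (\<lambda>l. (transpose_mat U *\<^sub>v (Phi *\<^sub>v z)) $ l))"
proof -
  define u where "u = Phi *\<^sub>v z"
  have uc: "u \<in> carrier_vec m" unfolding u_def using Phi z by auto
  define rb where "rb = transpose_mat U *\<^sub>v u"
  have rbc: "rb \<in> carrier_vec m" unfolding rb_def using U uc by auto
  have AA: "(transpose_mat A * A) ^\<^sub>m q \<in> carrier_mat n n" using A by simp
  have At: "transpose_mat A \<in> carrier_mat n m" using A by simp
  have "((transpose_mat A * A) ^\<^sub>m q * transpose_mat A * Phi) *\<^sub>v z
      = ((transpose_mat A * A) ^\<^sub>m q * transpose_mat A) *\<^sub>v u"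
    unfolding u_def using AA At Phi z by (intro assoc_mult_mat_vec) auto
  also have "\<dots> = (transpose_mat A * A) ^\<^sub>m q *\<^sub>v (transpose_mat A *\<^sub>v u)"
    using AA At uc by (intro assoc_mult_mat_vec) auto
  also have "transpose_mat A *\<^sub>v u = transpose_mat A *\<^sub>v (U *\<^sub>v rb)" unfolding rb_def using U_Ut[OF uc] by simp
  also have "\<dots> = V *\<^sub>v (transpose_mat S *\<^sub>v rb)" by (rule At_act[OF rbc])
  also have "transpose_mat S *\<^sub>v rb = D 1 (vec n (\<lambda>l. rb $ l))"
    unfolding D_def using St_index[OF rbc] S by (intro eq_vecI) auto
  also have "(transpose_mat A * A) ^\<^sub>m q *\<^sub>v (V *\<^sub>v D 1 (vec n (\<lambda>l. rb $ l))) = V *\<^sub>v D (2*q) (D 1 (vec n (\<lambda>l. rb $ l)))"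
    by (rule pow_act[OF D_carrier])
  also have "D (2*q) (D 1 (vec n (\<lambda>l. rb $ l))) = D (2*q+1) (vec n (\<lambda>l. rb $ l))" by (simp add: D_comp)
  finally show ?thesis unfolding rb_def u_def .
qed

lemma Aw_form: "y \<in> carrier_vec n \<Longrightarrow> transpose_mat U *\<^sub>v (A *\<^sub>v (V *\<^sub>v y)) = S *\<^sub>v y"
  using A_act Ut_U S by simp

lemma cf_index: "v \<in> carrier_vec m \<Longrightarrow> j < k \<Longrightarrow> k \<le> m \<Longrightarrow>
    (transpose_mat (cols_first k U) *\<^sub>v v) $ j = (transpose_mat U *\<^sub>v v) $ j"
  unfolding cols_first_def using U by (simp add: scalar_prod_def)

lemma cr_index: "v \<in> carrier_vec m \<Longrightarrow> j < m - k \<Longrightarrow>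
    (transpose_mat (cols_rest k U) *\<^sub>v v) $ j = (transpose_mat U *\<^sub>v v) $ (j + k)"
  unfolding cols_rest_def using U by (simp add: scalar_prod_def)

lemma construct:
  fixes Phi Z :: "real mat" and x :: "real vec"
  assumes Phi: "Phi \<in> carrier_mat m d" and kn: "k < n"
    and Z: "Z \<in> carrier_mat d k" and PZ: "(transpose_mat (cols_first k U) * Phi) * Z = 1\<^sub>m k"
    and pos: "\<forall>a<n. S $$ (a,a) \<ge> 0"
    and dec: "\<forall>a c. a \<le> c \<longrightarrow> c < n \<longrightarrow> S $$ (c,c) \<le> S $$ (a,a)"
    and sk: "S $$ (k-1,k-1) > 0" and i: "i < k"
    and x: "x \<in> carrier_vec k" and sup: "\<forall>l. i < l \<and> l < k \<longrightarrow> x $ l = 0"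
  shows "\<exists>z\<in>carrier_vec d. (\<forall>l<k. S $$ (l,l) ^ e * (transpose_mat U *\<^sub>v (Phi *\<^sub>v z)) $ l = x $ l) \<and>
     (\<Sum>l\<in>{k..<n}. (S $$ (l,l) ^ e * (transpose_mat U *\<^sub>v (Phi *\<^sub>v z)) $ l)^2)
       \<le> ((S $$ (k,k) / S $$ (i,i)) ^ e * norm2 ((transpose_mat (cols_rest k U) * Phi) * Z))^2 * (x \<bullet> x)"
proof -
  define \<sigma> where "\<sigma> = (\<lambda>l. S $$ (l,l))"
  have spos: "\<sigma> l > 0" if "l < k" for l
  proof -
    have "l \<le> k - 1" "k - 1 < n" using that kn by auto
    then have "S $$ (k-1,k-1) \<le> S $$ (l,l)" using dec by blast
    then show ?thesis using sk unfolding \<sigma>_def by simp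
  qed
  define g where "g = norm2 ((transpose_mat (cols_rest k U) * Phi) * Z)"
  define xs where "xs = vec k (\<lambda>l. x $ l / \<sigma> l ^ e)"
  have xsc: "xs \<in> carrier_vec k" unfolding xs_def by simp
  define z where "z = Z *\<^sub>v xs"
  have zc: "z \<in> carrier_vec d" unfolding z_def using Z xsc by simp
  define u where "u = Phi *\<^sub>v z"
  have uc: "u \<in> carrier_vec m" unfolding u_def using Phi zc by simp
  define rb where "rb = transpose_mat U *\<^sub>v u"
  have km: "k \<le> m" using kn mn by simp
  have Ukt: "transpose_mat (cols_first k U) \<in> carrier_mat k m" unfolding cols_first_def using U by simp
  have Urt: "transpose_mat (cols_rest k U) \<in> carrier_mat (m-k) m" unfolding cols_rest_def using U by simp
  have rb_low: "rb $ l = xs $ l" if l: "l < k" for l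
  proof -
    have "transpose_mat (cols_first k U) *\<^sub>v u = ((transpose_mat (cols_first k U) * Phi) * Z) *\<^sub>v xs"
      unfolding u_def z_def
      using assoc_mult_mat_vec[OF mult_carrier_mat[OF Ukt Phi] Z xsc]
        assoc_mult_mat_vec[OF Ukt Phi mult_mat_vec_carrier[OF Z xsc]] by simp
    also have "\<dots> = xs" unfolding PZ using xsc by simp
    finally have "(transpose_mat (cols_first k U) *\<^sub>v u) $ l = xs $ l" by simp
    then show ?thesis unfolding rb_def using cf_index[OF uc l km] by simp
  qed
  have low: "\<sigma> l ^ e * rb $ l = x $ l" if l: "l < k" for l
    using rb_low[OF l] spos[OF l] l unfolding xs_def by simp
  define w2 where "w2 = transpose_mat (cols_rest k U) *\<^sub>v u"
  have w2c: "w2 \<in> carrier_vec (m-k)" unfolding w2_def using Urt uc by simp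
  have w2eq: "w2 = ((transpose_mat (cols_rest k U) * Phi) * Z) *\<^sub>v xs"
    unfolding w2_def u_def z_def
      using assoc_mult_mat_vec[OF mult_carrier_mat[OF Urt Phi] Z xsc]
        assoc_mult_mat_vec[OF Urt Phi mult_mat_vec_carrier[OF Z xsc]] by simp
  have PZc: "(transpose_mat (cols_rest k U) * Phi) * Z \<in> carrier_mat (m-k) k" using Urt Phi Z by simp
  have g0: "g \<ge> 0" unfolding g_def by (rule norm2_nonneg[OF PZc])
  have "vnorm w2 \<le> g * vnorm xs" unfolding w2eq g_def by (rule norm2_bound[OF PZc xsc])
  then have "(vnorm w2)^2 \<le> (g * vnorm xs)^2" using vnorm_ge0 by (intro power_mono) auto
  then have w2n: "w2 \<bullet> w2 \<le> g^2 * (xs \<bullet> xs)" unfolding vnorm_def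
    using sp_self_ge0 by (simp add: power_mult_distrib)
  have tail_m: "(\<Sum>l\<in>{k..<m}. (rb $ l)^2) = w2 \<bullet> w2"
  proof -
    have "w2 \<bullet> w2 = (\<Sum>j<m-k. (w2 $ j)^2)" using sp_self_sum[of w2] w2c by simp
    also have "\<dots> = (\<Sum>j<m-k. (rb $ (j+k))^2)"
      unfolding w2_def rb_def using cr_index[OF uc] by simp
    also have "\<dots> = (\<Sum>l\<in>{k..<m}. (rb $ l)^2)"
    proof -
      have "(\<Sum>l\<in>{0+k..<(m-k)+k}. (rb $ l)^2) = (\<Sum>j\<in>{0..<m-k}. (rb $ (j+k))^2)"
        by (rule sum.shift_bounds_nat_ivl)
      then show ?thesis using km by (simp add: lessThan_atLeast0)
    qed
    finally show ?thesis by simp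
  qed
  have xsn: "xs \<bullet> xs \<le> (x \<bullet> x) / (\<sigma> i ^ e)^2"
  proof -
    have "xs \<bullet> xs = (\<Sum>l<k. (x $ l / \<sigma> l ^ e)^2)" using sp_self_sum[of xs] unfolding xs_def by simp
    also have "\<dots> \<le> (\<Sum>l<k. (x $ l)^2 / (\<sigma> i ^ e)^2)"
    proof (intro sum_mono)
      fix l assume l: "l \<in> {..<k}"
      show "(x $ l / \<sigma> l ^ e)^2 \<le> (x $ l)^2 / (\<sigma> i ^ e)^2"
      proof (cases "l \<le> i")
        case True
        have "\<sigma> i \<le> \<sigma> l" using dec True i kn unfolding \<sigma>_def by auto
        have si: "0 < \<sigma> i" using spos[OF i] .
        then have "\<sigma> i ^ e \<le> \<sigma> l ^ e" using \<open>\<sigma> i \<le> \<sigma> l\<close> by (intro power_mono) auto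
        then have "(\<sigma> i ^ e)^2 \<le> (\<sigma> l ^ e)^2" using si power_mono[of "\<sigma> i ^ e" "\<sigma> l ^ e" 2] by simp
        moreover have "(\<sigma> i ^ e)^2 > 0" using si by simp
        ultimately have pa: "(\<sigma> i ^ e)^2 \<le> (\<sigma> l ^ e)^2" "(\<sigma> i ^ e)^2 > 0" by auto
        then have pb: "(\<sigma> l ^ e)^2 > 0" by linarith
        have pp: "(\<sigma> l ^ e)^2 * (\<sigma> i ^ e)^2 > 0" "(\<sigma> i ^ e)^2 \<le> (\<sigma> l ^ e)^2"
          using mult_pos_pos[OF pb pa(2)] pa(1) by auto
        have "(x $ l)^2 / (\<sigma> l ^ e)^2 \<le> (x $ l)^2 / (\<sigma> i ^ e)^2"
          by (rule divide_left_mono[OF pp(2) _ pp(1)]) simp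
        then show ?thesis by (simp add: power_divide)
      next
        case False
        then show ?thesis using sup l by simp
      qed
    qed
    also have "\<dots> = (x \<bullet> x) / (\<sigma> i ^ e)^2" using sp_self_sum[of x] x by (simp add: sum_divide_distrib)
    finally show ?thesis .
  qed
  have tail: "(\<Sum>l\<in>{k..<n}. (\<sigma> l ^ e * rb $ l)^2) \<le> (\<sigma> k ^ e)^2 * (\<Sum>l\<in>{k..<m}. (rb $ l)^2)"
  proof -
    have "(\<Sum>l\<in>{k..<n}. (\<sigma> l ^ e * rb $ l)^2) \<le> (\<Sum>l\<in>{k..<n}. (\<sigma> k ^ e)^2 * (rb $ l)^2)"
    proof (intro sum_mono)
      fix l assume l: "l \<in> {k..<n}"
      have "0 \<le> \<sigma> l" "\<sigma> l \<le> \<sigma> k" using pos dec l unfolding \<sigma>_def by auto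
      then have "\<sigma> l ^ e \<le> \<sigma> k ^ e" by (intro power_mono) auto
      then have "(\<sigma> l ^ e)^2 \<le> (\<sigma> k ^ e)^2" using \<open>0 \<le> \<sigma> l\<close> power_mono[of "\<sigma> l ^ e" "\<sigma> k ^ e" 2] by simp
      then show "(\<sigma> l ^ e * rb $ l)^2 \<le> (\<sigma> k ^ e)^2 * (rb $ l)^2"
        by (simp add: power_mult_distrib mult_right_mono)
    qed
    also have "\<dots> = (\<sigma> k ^ e)^2 * (\<Sum>l\<in>{k..<n}. (rb $ l)^2)" by (simp add: sum_distrib_left)
    also have "\<dots> \<le> (\<sigma> k ^ e)^2 * (\<Sum>l\<in>{k..<m}. (rb $ l)^2)"
      using mn by (intro mult_left_mono sum_mono2) auto
    finally show ?thesis .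
  qed
  have "(\<Sum>l\<in>{k..<n}. (\<sigma> l ^ e * rb $ l)^2) \<le> (\<sigma> k ^ e)^2 * (g^2 * ((x \<bullet> x) / (\<sigma> i ^ e)^2))"
  proof -
    have "(\<Sum>l\<in>{k..<m}. (rb $ l)^2) \<le> g^2 * ((x \<bullet> x) / (\<sigma> i ^ e)^2)"
      unfolding tail_m using w2n xsn by (smt (verit) mult_left_mono zero_le_power2)
    then show ?thesis using tail by (smt (verit) mult_left_mono zero_le_power2)
  qed
  also have "\<dots> = ((\<sigma> k / \<sigma> i) ^ e * g)^2 * (x \<bullet> x)"
    using spos[OF i] by (simp add: power_divide power_mult_distrib field_simps)
  finally have "(\<Sum>l\<in>{k..<n}. (\<sigma> l ^ e * rb $ l)^2) \<le> ((\<sigma> k / \<sigma> i) ^ e * g)^2 * (x \<bullet> x)" .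
  then show ?thesis using low zc unfolding rb_def u_def g_def \<sigma>_def by blast
qed

end



theorem theorem2:
  fixes A U S V Phi Pbar Q R Ptil Rtil :: "real mat" and m n k p d q :: nat
  assumes A_dim: "A \<in> carrier_mat m n" and mn: "n \<le> m"
    and svd: "is_svd A U S V"
    and k1: "k \<ge> 1" and sk: "S $$ (k-1,k-1) > 0"
    and p1: "p \<ge> 1" and d_def: "d = k + p" and dn: "d < n"
    and Phi_dim: "Phi \<in> carrier_mat m d"
    and Pbar_dim: "Pbar \<in> carrier_mat n d" and Pbar_orth: "orth_cols Pbar"
    and Pbar_range: "range_mat Pbar =
          range_mat ((transpose_mat A * A) ^\<^sub>m q * transpose_mat A * Phi)"
    and Pbar_rank: "vec_space.rank n ((transpose_mat A * A) ^\<^sub>m q * transpose_mat A * Phi) = d"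
    and Q_dim: "Q \<in> carrier_mat m d" and Q_orth: "orth_cols Q"
    and R_dim: "R \<in> carrier_mat d d" and R_ut: "upper_triangular R"
    and QR: "A * Pbar = Q * R"
    and Ptil_dim: "Ptil \<in> carrier_mat d d" and Ptil_orth: "orth_cols Ptil"
    and Rtil_dim: "Rtil \<in> carrier_mat d d" and Rtil_ut: "upper_triangular Rtil"
    and QR2: "transpose_mat R = Ptil * Rtil"
    and Phi1_rank: "vec_space.rank k (transpose_mat (cols_first k U) * Phi) = k"
  shows
    "let Uk = cols_first k U; Vk = cols_first k V;
         Phi1 = transpose_mat Uk * Phi;
         Phi2 = transpose_mat (cols_rest k U) * Phi;
         g = norm2 (Phi2 * pinv Phi1);
         P = Pbar * Ptil;
         \<delta> = (\<lambda>i. S $$ (k,k) / S $$ (i,i))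
     in (\<forall>t. principal_angle_sines Q Uk t \<longrightarrow>
           (\<forall>i<k. t i \<le> \<delta> i ^ (2*q+2) * g / sqrt (1 + \<delta> i ^ (4*q+4) * g\<^sup>2)))
      \<and> (\<forall>t. principal_angle_sines P Vk t \<longrightarrow>
           (\<forall>i<k. t i \<le> \<delta> i ^ (2*q+1) * g / sqrt (1 + \<delta> i ^ (4*q+2) * g\<^sup>2)))"
  proof -
  have dA: "dim_row A = m" "dim_col A = n" using A_dim by auto
  have mn_min: "min m n = n" using mn by simp
  have U: "U \<in> carrier_mat m m" and Uo: "orth_cols U" and V: "V \<in> carrier_mat n n" and Vo: "orth_cols V"
    and S: "S \<in> carrier_mat m n"
    and off: "\<forall>i<m. \<forall>j<n. i \<noteq> j \<longrightarrow> S $$ (i,j) = 0"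
    and pos: "\<forall>a<n. S $$ (a,a) \<ge> 0"
    and dec: "\<forall>a c. a \<le> c \<longrightarrow> c < n \<longrightarrow> S $$ (c,c) \<le> S $$ (a,a)"
    and AU: "A = U * S * transpose_mat V"
    using svd unfolding is_svd_def orthogonal_mat_def dA mn_min by auto
  note ctx = A_dim mn U Uo V Vo S off AU
  have kn: "k < n" using d_def p1 dn by simp
  have km: "k \<le> m" using kn mn by simp
  have Ukt: "transpose_mat (cols_first k U) \<in> carrier_mat k m" unfolding cols_first_def using U by simp
  define Phi1 where "Phi1 = transpose_mat (cols_first k U) * Phi"
  have P1c: "Phi1 \<in> carrier_mat k d" unfolding Phi1_def using Ukt Phi_dim by simp
  obtain Z where Z: "Z \<in> carrier_mat d k" "Phi1 * Z = 1\<^sub>m k" and Zdef: "Z = pinv Phi1"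
    using pinv_full_row[OF P1c Phi1_rank[folded Phi1_def]] by blast
  define g where "g = norm2 ((transpose_mat (cols_rest k U) * Phi) * Z)"
  have Urt: "transpose_mat (cols_rest k U) \<in> carrier_mat (m-k) m" unfolding cols_rest_def using U by simp
  have g0: "g \<ge> 0" unfolding g_def using Urt Phi_dim Z by (intro norm2_nonneg) auto
  have spos: "S $$ (l,l) > 0" if "l < k" for l
  proof -
    have "l \<le> k - 1" "k - 1 < n" using that kn by auto
    then have "S $$ (k-1,k-1) \<le> S $$ (l,l)" using dec by blast
    then show ?thesis using sk by simp
  qed
  have skk: "S $$ (k,k) \<ge> 0" using pos kn by simp
  have dpos: "S $$ (k,k) / S $$ (i,i) \<ge> 0" if "i < k" for i using spos[OF that] skk by simp
  define W where "W = (transpose_mat A * A) ^\<^sub>m q * transpose_mat A * Phi"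
  have AAc: "transpose_mat A * A \<in> carrier_mat n n" using A_dim by simp
  have Wc: "W \<in> carrier_mat n d" unfolding W_def
    using pow_carrier_mat[OF AAc, of q] A_dim Phi_dim by (intro mult_carrier_mat) auto
  have Wform: "W *\<^sub>v z = V *\<^sub>v D S n (2*q+1) (vec n (\<lambda>l. (transpose_mat U *\<^sub>v (Phi *\<^sub>v z)) $ l))"
    if "z \<in> carrier_vec d" for z
    unfolding W_def by (rule w_form[OF ctx Phi_dim that])
  have WinP: "W *\<^sub>v z \<in> range_mat Pbar" if "z \<in> carrier_vec d" for z
    using Pbar_range[folded W_def] that Wc unfolding range_mat_def by auto
  have tau_eq: "(\<delta> ^ a * g)^2 = \<delta> ^ (2*a) * g^2" for \<delta> :: real and a
    by (simp add: power_mult_distrib power_mult[symmetric] mult.commute)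
  show ?thesis
    unfolding Let_def Phi1_def[symmetric] Zdef[symmetric] g_def[symmetric]
  proof (intro conjI allI impI)
    fix t i assume pa: "principal_angle_sines Q (cols_first k U) t" and i: "i < k"
    define \<tau> where "\<tau> = (S $$ (k,k) / S $$ (i,i)) ^ (2*q+2) * g"
    have tau0: "\<tau> \<ge> 0" unfolding \<tau>_def using dpos[OF i] g0 by (intro mult_nonneg_nonneg zero_le_power) auto
    have "t i \<le> \<tau> / sqrt (1 + \<tau>^2)"
    proof (rule angle_bound[OF Q_dim Q_orth U Uo km i tau0 _ pa])
      fix x :: "real vec" assume x: "x \<in> carrier_vec k" and sup: "\<forall>l. i < l \<and> l < k \<longrightarrow> x $ l = 0"
      obtain z where zc: "z \<in> carrier_vec d"
        and low: "\<forall>l<k. S $$ (l,l) ^ (2*q+2) * (transpose_mat U *\<^sub>v (Phi *\<^sub>v z)) $ l = x $ l"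
        and tl: "(\<Sum>l\<in>{k..<n}. (S $$ (l,l) ^ (2*q+2) * (transpose_mat U *\<^sub>v (Phi *\<^sub>v z)) $ l)^2) \<le> \<tau>^2 * (x \<bullet> x)"
        using construct[OF ctx Phi_dim kn Z(1) Z(2)[unfolded Phi1_def] pos dec sk i x sup, of "2*q+2"]
        unfolding \<tau>_def g_def by blast
      define rb where "rb = transpose_mat U *\<^sub>v (Phi *\<^sub>v z)"
      define y where "y = D S n (2*q+1) (vec n (\<lambda>l. rb $ l))"
      have yc: "y \<in> carrier_vec n" unfolding y_def D_def[OF ctx] by simp
      define r where "r = S *\<^sub>v y"
      have rc: "r \<in> carrier_vec m" unfolding r_def using S yc by simp
      have rl: "r $ l = (if l < n then S $$ (l,l) ^ (2*q+2) * rb $ l else 0)" if "l < m" for l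
        unfolding r_def using S_index[OF ctx yc that] unfolding y_def D_def[OF ctx]
        by (auto simp: power_Suc)
      show "\<exists>r\<in>carrier_vec m. U *\<^sub>v r \<in> range_mat Q \<and> (\<forall>l<k. r $ l = x $ l) \<and>
          (\<Sum>l\<in>{k..<m}. (r $ l)^2) \<le> \<tau>^2 * (x \<bullet> x)"
      proof (intro bexI[OF _ rc] conjI)
        have Vy: "V *\<^sub>v y = W *\<^sub>v z" using Wform[OF zc] unfolding y_def rb_def by simp
        obtain v where v: "v \<in> carrier_vec d" "V *\<^sub>v y = Pbar *\<^sub>v v"
          using WinP[OF zc] Pbar_dim unfolding Vy range_mat_def by auto
        have "U *\<^sub>v r = A *\<^sub>v (V *\<^sub>v y)"
          unfolding r_def using Aw_form[OF ctx yc] U_Ut[OF ctx] A_dim V yc by (metis mult_mat_vec_carrier)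
        also have "\<dots> = Q *\<^sub>v (R *\<^sub>v v)" unfolding v(2)
          using assoc_mult_mat_vec[OF A_dim Pbar_dim v(1), symmetric] QR
            assoc_mult_mat_vec[OF Q_dim R_dim v(1)] by simp
        finally show "U *\<^sub>v r \<in> range_mat Q" unfolding range_mat_def using Q_dim R_dim v(1) by auto
        show "\<forall>l<k. r $ l = x $ l" using rl low kn mn unfolding rb_def by auto
        have "(\<Sum>l\<in>{k..<m}. (r $ l)^2) = (\<Sum>l\<in>{k..<n}. (r $ l)^2) + (\<Sum>l\<in>{n..<m}. (r $ l)^2)"
          using kn mn by (simp add: sum.atLeastLessThan_concat)
        also have "(\<Sum>l\<in>{n..<m}. (r $ l)^2) = 0" using rl by simp
        also have "(\<Sum>l\<in>{k..<n}. (r $ l)^2) = (\<Sum>l\<in>{k..<n}. (S $$ (l,l) ^ (2*q+2) * rb $ l)^2)"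
          using rl mn by (intro sum.cong) auto
        finally show "(\<Sum>l\<in>{k..<m}. (r $ l)^2) \<le> \<tau>^2 * (x \<bullet> x)" using tl unfolding rb_def by simp
      qed
    qed
    moreover have "\<tau>^2 = (S $$ (k,k) / S $$ (i,i)) ^ (4*q+4) * g^2"
    proof -
      have ex: "2 * (2*q+2) = (4*q+4::nat)" by simp
      show ?thesis unfolding \<tau>_def tau_eq ex ..
    qed
    ultimately have "t i \<le> \<tau> / sqrt (1 + (S $$ (k,k) / S $$ (i,i)) ^ (4*q+4) * g^2)" by simp
    then show "t i \<le> (S $$ (k,k) / S $$ (i,i)) ^ (2*q+2) * g /
        sqrt (1 + (S $$ (k,k) / S $$ (i,i)) ^ (4*q+4) * g^2)"
      unfolding \<tau>_def .
  next
    fix t i assume pa: "principal_angle_sines (Pbar * Ptil) (cols_first k V) t" and i: "i < k"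
    define \<tau> where "\<tau> = (S $$ (k,k) / S $$ (i,i)) ^ (2*q+1) * g"
    have tau0: "\<tau> \<ge> 0" unfolding \<tau>_def using dpos[OF i] g0 by (intro mult_nonneg_nonneg zero_le_power) auto
    have Pc: "Pbar * Ptil \<in> carrier_mat n d" using Pbar_dim Ptil_dim by simp
    have Po: "orth_cols (Pbar * Ptil)"
    proof -
      have Ptt: "transpose_mat Ptil \<in> carrier_mat d d" and Pbt: "transpose_mat Pbar \<in> carrier_mat d n"
        using Ptil_dim Pbar_dim by auto
      have PbPt: "Pbar * Ptil \<in> carrier_mat n d" using Pbar_dim Ptil_dim by simp
      have "transpose_mat (Pbar * Ptil) * (Pbar * Ptil) = (transpose_mat Ptil * transpose_mat Pbar) * (Pbar * Ptil)"
        using transpose_mult[OF Pbar_dim Ptil_dim] by simp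
      also have "\<dots> = transpose_mat Ptil * (transpose_mat Pbar * (Pbar * Ptil))"
        by (rule assoc_mult_mat[OF Ptt Pbt PbPt])
      also have "transpose_mat Pbar * (Pbar * Ptil) = (transpose_mat Pbar * Pbar) * Ptil"
        by (rule assoc_mult_mat[OF Pbt Pbar_dim Ptil_dim, symmetric])
      also have "transpose_mat Pbar * Pbar = 1\<^sub>m d" using Pbar_orth Pbar_dim unfolding orth_cols_def by simp
      also have "transpose_mat Ptil * (1\<^sub>m d * Ptil) = 1\<^sub>m d"
        using Ptil_orth Ptil_dim unfolding orth_cols_def by simp
      finally show ?thesis unfolding orth_cols_def using Ptil_dim by simp
    qed
    have "t i \<le> \<tau> / sqrt (1 + \<tau>^2)"
    proof (rule angle_bound[OF Pc Po V Vo _ i tau0 _ pa])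
      show "k \<le> n" using kn by simp
      fix x :: "real vec" assume x: "x \<in> carrier_vec k" and sup: "\<forall>l. i < l \<and> l < k \<longrightarrow> x $ l = 0"
      obtain z where zc: "z \<in> carrier_vec d"
        and low: "\<forall>l<k. S $$ (l,l) ^ (2*q+1) * (transpose_mat U *\<^sub>v (Phi *\<^sub>v z)) $ l = x $ l"
        and tl: "(\<Sum>l\<in>{k..<n}. (S $$ (l,l) ^ (2*q+1) * (transpose_mat U *\<^sub>v (Phi *\<^sub>v z)) $ l)^2) \<le> \<tau>^2 * (x \<bullet> x)"
        using construct[OF ctx Phi_dim kn Z(1) Z(2)[unfolded Phi1_def] pos dec sk i x sup, of "2*q+1"]
        unfolding \<tau>_def g_def by blast
      define rb where "rb = transpose_mat U *\<^sub>v (Phi *\<^sub>v z)"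
      define y where "y = D S n (2*q+1) (vec n (\<lambda>l. rb $ l))"
      have yc: "y \<in> carrier_vec n" unfolding y_def D_def[OF ctx] by simp
      have yl: "y $ l = S $$ (l,l) ^ (2*q+1) * rb $ l" if "l < n" for l
        unfolding y_def D_def[OF ctx] using that by simp
      show "\<exists>r\<in>carrier_vec n. V *\<^sub>v r \<in> range_mat (Pbar * Ptil) \<and> (\<forall>l<k. r $ l = x $ l) \<and>
          (\<Sum>l\<in>{k..<n}. (r $ l)^2) \<le> \<tau>^2 * (x \<bullet> x)"
      proof (intro bexI[OF _ yc] conjI)
        have Vy: "V *\<^sub>v y = W *\<^sub>v z" using Wform[OF zc] unfolding y_def rb_def by simp
        obtain v where v: "v \<in> carrier_vec d" "V *\<^sub>v y = Pbar *\<^sub>v v"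
          using WinP[OF zc] Pbar_dim unfolding Vy range_mat_def by auto
        have PP: "Ptil * transpose_mat Ptil = 1\<^sub>m d" by (rule orth_square_right[OF Ptil_dim Ptil_orth])
        have "Pbar *\<^sub>v v = (Pbar * Ptil) *\<^sub>v (transpose_mat Ptil *\<^sub>v v)"
        proof -
          have "(Pbar * Ptil) *\<^sub>v (transpose_mat Ptil *\<^sub>v v) = Pbar *\<^sub>v (Ptil *\<^sub>v (transpose_mat Ptil *\<^sub>v v))"
            using Pbar_dim Ptil_dim v(1) by (intro assoc_mult_mat_vec) auto
          also have "Ptil *\<^sub>v (transpose_mat Ptil *\<^sub>v v) = v"
            using assoc_mult_mat_vec[of Ptil d d "transpose_mat Ptil" d v, symmetric] PP Ptil_dim v(1) by simp
          finally show ?thesis by simp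
        qed
        note eqv = this
        have tv: "transpose_mat Ptil *\<^sub>v v \<in> carrier_vec d" using Ptil_dim v(1) by simp
        have dc: "dim_col (Pbar * Ptil) = d" using Ptil_dim by simp
        show "V *\<^sub>v y \<in> range_mat (Pbar * Ptil)" unfolding v(2) range_mat_def dc
          using eqv tv by blast
        show "\<forall>l<k. y $ l = x $ l" using yl low kn unfolding rb_def by auto
        have "(\<Sum>l\<in>{k..<n}. (y $ l)^2) = (\<Sum>l\<in>{k..<n}. (S $$ (l,l) ^ (2*q+1) * rb $ l)^2)"
          using yl by (intro sum.cong) auto
        then show "(\<Sum>l\<in>{k..<n}. (y $ l)^2) \<le> \<tau>^2 * (x \<bullet> x)" using tl unfolding rb_def by simp
      qed
    qed
    moreover have "\<tau>^2 = (S $$ (k,k) / S $$ (i,i)) ^ (4*q+2) * g^2"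
    proof -
      have ex: "2 * (2*q+1) = (4*q+2::nat)" by simp
      show ?thesis unfolding \<tau>_def tau_eq ex ..
    qed
    ultimately have "t i \<le> \<tau> / sqrt (1 + (S $$ (k,k) / S $$ (i,i)) ^ (4*q+2) * g^2)" by simp
    then show "t i \<le> (S $$ (k,k) / S $$ (i,i)) ^ (2*q+1) * g /
        sqrt (1 + (S $$ (k,k) / S $$ (i,i)) ^ (4*q+2) * g^2)"
      unfolding \<tau>_def .
  qed
qed

end
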